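(* Let $(X_1,\dots,X_d)$ be a non-degenerate $d$-dimensional $1$-Meixner random vector with $E[X_k]=0$ and $E[X_iX_j]=\delta_{i,j}$ for all $i,j,k$, and let $\alpha_{i,j,k}$ be the real numbers with $[U_i,X_j]=\sum_{k}\alpha_{i,j,k}X_k+\beta_{i,j}I$. Then for all $(i,j,k)\in\{1,\dots,d\}^3$: (1) $\alpha_{i,j,k}=\alpha_{j,i,k}$; (2) $\alpha_{i,j,k}=\alpha_{i,k,j}$; (3) for every permutation $\pi$ of $(i,j,k)$, $\alpha_{\pi(i),\pi(j),\pi(k)}=\alpha_{i,j,k}$.
   Context: Let $X_1,\dots,X_d$ be real random variables on $(\Omega,\mathcal F,P)$ with finite moments of all orders. $F$ is the space of polynomial random variables $f(X_1,\dots,X_d)$ (complex coefficients), $F_n$ those of degree $\le n$, $G_0=F_0$, $G_n=F_n\ominus F_{n-1}$ in $L^2(P)$. For $f\in G_n$, $X_if\in G_{n-1}\oplus G_n\oplus G_{n+1}$; its components define $a^-(i)f,a^0(i)f,a^+(i)f$ respectively, extended linearly to $F$. $U_i:=a^-(i)+\tfrac12a^0(i)$ (semi-annihilation operator). $(X_1,\dots,X_d)$ is a $d$-dimensional $1$-Meixner random vector if there are reals $\alpha_{i,j,k},\beta_{i,j}$ with $[U_i,X_j]=\sum_k\alpha_{i,j,k}X_k+\beta_{i,j}I$ on $F$ for all $i,j$ (with $X_j$ the multiplication operator, $I$ the identity); it is non-degenerate if $I,X_1,\dots,X_d$ are linearly independent operators on $F$. *)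

theory Defs
  imports "HOL-Probability.Probability"
begin

text \<open>Random vector (X_0,...,X_{d-1}) (0-based indexing of the paper's X_1..X_d).
  Polynomial random variables are complex-valued functions on the sample space;
  elements of L^2 that agree almost everywhere are identified by stating all
  operator identities almost everywhere.\<close>

definition mono_rv :: "nat \<Rightarrow> (nat \<Rightarrow> 'a \<Rightarrow> real) \<Rightarrow> (nat \<Rightarrow> nat) \<Rightarrow> 'a \<Rightarrow> complex" where
  "mono_rv d X \<alpha> \<omega> = (\<Prod>i<d. complex_of_real (X i \<omega>) ^ \<alpha> i)"

definition poly_rv_deg :: "nat \<Rightarrow> (nat \<Rightarrow> 'a \<Rightarrow> real) \<Rightarrow> nat \<Rightarrow> ('a \<Rightarrow> complex) set" where
  "poly_rv_deg d X n = {f. \<exists>A c. finite A \<and> (\<forall>\<alpha>\<in>A. (\<Sum>i<d. \<alpha> i) \<le> n) \<and>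
      f = (\<lambda>\<omega>. \<Sum>\<alpha>\<in>A. c \<alpha> * mono_rv d X \<alpha> \<omega>)}"

definition poly_rv :: "nat \<Rightarrow> (nat \<Rightarrow> 'a \<Rightarrow> real) \<Rightarrow> ('a \<Rightarrow> complex) set" where
  "poly_rv d X = (\<Union>n. poly_rv_deg d X n)"

definition ip :: "'a measure \<Rightarrow> ('a \<Rightarrow> complex) \<Rightarrow> ('a \<Rightarrow> complex) \<Rightarrow> complex" where
  "ip M f g = (LINT \<omega>|M. f \<omega> * cnj (g \<omega>))"

definition G_space :: "'a measure \<Rightarrow> nat \<Rightarrow> (nat \<Rightarrow> 'a \<Rightarrow> real) \<Rightarrow> nat \<Rightarrow> ('a \<Rightarrow> complex) set" where
  "G_space M d X n = (if n = 0 then poly_rv_deg d X 0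
     else {f \<in> poly_rv_deg d X n. \<forall>g \<in> poly_rv_deg d X (n - 1). ip M f g = 0})"

text \<open>Orthogonal projection onto G_n (a representative; unique up to a.e. equality).\<close>
definition proj_G :: "'a measure \<Rightarrow> nat \<Rightarrow> (nat \<Rightarrow> 'a \<Rightarrow> real) \<Rightarrow> nat \<Rightarrow> ('a \<Rightarrow> complex) \<Rightarrow> 'a \<Rightarrow> complex" where
  "proj_G M d X n f = (SOME g. g \<in> G_space M d X n \<and>
      (\<forall>h \<in> G_space M d X n. ip M (\<lambda>\<omega>. f \<omega> - g \<omega>) h = 0))"

definition poly_degree :: "nat \<Rightarrow> (nat \<Rightarrow> 'a \<Rightarrow> real) \<Rightarrow> ('a \<Rightarrow> complex) \<Rightarrow> nat" where
  "poly_degree d X f = (LEAST n. f \<in> poly_rv_deg d X n)"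

definition mult_op :: "(nat \<Rightarrow> 'a \<Rightarrow> real) \<Rightarrow> nat \<Rightarrow> ('a \<Rightarrow> complex) \<Rightarrow> 'a \<Rightarrow> complex" where
  "mult_op X j f = (\<lambda>\<omega>. complex_of_real (X j \<omega>) * f \<omega>)"

text \<open>a^-(i): for f in G_n, the G_{n-1}-component of X_i f; extended linearly to F
  via the decomposition f = sum_n (projection of f onto G_n).\<close>
definition ann_op :: "'a measure \<Rightarrow> nat \<Rightarrow> (nat \<Rightarrow> 'a \<Rightarrow> real) \<Rightarrow> nat \<Rightarrow> ('a \<Rightarrow> complex) \<Rightarrow> 'a \<Rightarrow> complex" where
  "ann_op M d X i f = (\<lambda>\<omega>. \<Sum>n\<in>{1..poly_degree d X f}.
      proj_G M d X (n - 1) (mult_op X i (proj_G M d X n f)) \<omega>)"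

text \<open>a^0(i): for f in G_n, the G_n-component of X_i f; extended linearly.\<close>
definition pres_op :: "'a measure \<Rightarrow> nat \<Rightarrow> (nat \<Rightarrow> 'a \<Rightarrow> real) \<Rightarrow> nat \<Rightarrow> ('a \<Rightarrow> complex) \<Rightarrow> 'a \<Rightarrow> complex" where
  "pres_op M d X i f = (\<lambda>\<omega>. \<Sum>n\<in>{0..poly_degree d X f}.
      proj_G M d X n (mult_op X i (proj_G M d X n f)) \<omega>)"

definition semi_ann :: "'a measure \<Rightarrow> nat \<Rightarrow> (nat \<Rightarrow> 'a \<Rightarrow> real) \<Rightarrow> nat \<Rightarrow> ('a \<Rightarrow> complex) \<Rightarrow> 'a \<Rightarrow> complex" where
  "semi_ann M d X i f = (\<lambda>\<omega>. ann_op M d X i f \<omega> + (1/2) * pres_op M d X i f \<omega>)"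

definition finite_moments_vector :: "'a measure \<Rightarrow> nat \<Rightarrow> (nat \<Rightarrow> 'a \<Rightarrow> real) \<Rightarrow> bool" where
  "finite_moments_vector M d X \<longleftrightarrow> prob_space M \<and>
     (\<forall>i<d. X i \<in> borel_measurable M \<and> (\<forall>n::nat. integrable M (\<lambda>\<omega>. \<bar>X i \<omega>\<bar> ^ n)))"

definition one_Meixner_with :: "'a measure \<Rightarrow> nat \<Rightarrow> (nat \<Rightarrow> 'a \<Rightarrow> real)
    \<Rightarrow> (nat \<Rightarrow> nat \<Rightarrow> nat \<Rightarrow> real) \<Rightarrow> (nat \<Rightarrow> nat \<Rightarrow> real) \<Rightarrow> bool" where
  "one_Meixner_with M d X \<alpha> \<beta> \<longleftrightarrow>
     (\<forall>i<d. \<forall>j<d. \<forall>f \<in> poly_rv d X. AE \<omega> in M.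
        semi_ann M d X i (mult_op X j f) \<omega> - complex_of_real (X j \<omega>) * semi_ann M d X i f \<omega>
        = (\<Sum>k<d. complex_of_real (\<alpha> i j k) * complex_of_real (X k \<omega>)) * f \<omega>
          + complex_of_real (\<beta> i j) * f \<omega>)"

definition non_degenerate :: "'a measure \<Rightarrow> nat \<Rightarrow> (nat \<Rightarrow> 'a \<Rightarrow> real) \<Rightarrow> bool" where
  "non_degenerate M d X \<longleftrightarrow>
     (\<forall>(c0::complex) (c::nat \<Rightarrow> complex).
        (\<forall>f \<in> poly_rv d X. AE \<omega> in M.
           c0 * f \<omega> + (\<Sum>k<d. c k * complex_of_real (X k \<omega>) * f \<omega>) = 0)
        \<longrightarrow> c0 = 0 \<and> (\<forall>k<d. c k = 0))"

end

theory Submission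
  imports Defs
begin


lemma mono_zero: "mono_rv d X (\<lambda>_. 0) = (\<lambda>_. 1)"
  by (simp add: mono_rv_def fun_eq_iff)

lemma mono_ind: "k < d \<Longrightarrow> mono_rv d X (\<lambda>i. if i = k then 1 else 0) = (\<lambda>\<omega>. complex_of_real (X k \<omega>))"
proof -
  assume k: "k < d"
  have "\<And>\<omega>. (\<Prod>i<d. complex_of_real (X i \<omega>) ^ (if i = k then 1 else 0)) = (\<Prod>i<d. if i = k then complex_of_real (X k \<omega>) else 1)"
    by (rule prod.cong) auto
  then show ?thesis using k by (simp add: mono_rv_def fun_eq_iff prod.delta)
qed

lemma mono_le1:
  assumes "(\<Sum>i<d. \<alpha> i) \<le> (1::nat)"
  shows "mono_rv d X \<alpha> = (\<lambda>_. 1) \<or> (\<exists>k<d. mono_rv d X \<alpha> = (\<lambda>\<omega>. complex_of_real (X k \<omega>)))"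
proof (cases "\<forall>i<d. \<alpha> i = 0")
  case True
  then show ?thesis by (simp add: mono_rv_def fun_eq_iff)
next
  case False
  then obtain k where k: "k < d" "\<alpha> k \<noteq> 0" by auto
  have ak: "\<alpha> k = 1" using member_le_sum[of k "{..<d}" \<alpha>] k assms by simp
  have oth: "\<alpha> i = 0" if "i < d" "i \<noteq> k" for i
  proof -
    have "sum \<alpha> {k, i} \<le> sum \<alpha> {..<d}" by (rule sum_mono2) (use k that in auto)
    then show ?thesis using that k assms by simp
  qed
  have "\<And>\<omega>. (\<Prod>i<d. complex_of_real (X i \<omega>) ^ \<alpha> i) = (\<Prod>i<d. if i = k then complex_of_real (X k \<omega>) else 1)"
    by (rule prod.cong) (use ak k oth in auto)
  then show ?thesis using k by (auto simp add: mono_rv_def fun_eq_iff prod.delta)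
qed

lemma F0_char: fixes X :: "nat \<Rightarrow> 'a \<Rightarrow> real" shows "poly_rv_deg d X 0 = {f. \<exists>c. f = (\<lambda>_::'a. c)}"
proof
  show "poly_rv_deg d X 0 \<subseteq> {f. \<exists>c. f = (\<lambda>_::'a. c)}"
  proof
    fix f :: "'a \<Rightarrow> complex" assume "f \<in> poly_rv_deg d X 0"
    then obtain A c where A: "\<forall>\<alpha>\<in>A. (\<Sum>i<d. \<alpha> i) \<le> 0" "f = (\<lambda>\<omega>. \<Sum>\<alpha>\<in>A. c \<alpha> * mono_rv d X \<alpha> \<omega>)"
      unfolding poly_rv_deg_def by blast
    have "\<And>\<alpha>. \<alpha> \<in> A \<Longrightarrow> mono_rv d X \<alpha> = (\<lambda>_. 1)"
      using A(1) by (auto simp: mono_rv_def fun_eq_iff)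
    then have "f = (\<lambda>_. \<Sum>\<alpha>\<in>A. c \<alpha>)" using A(2) by (simp add: fun_eq_iff)
    then show "f \<in> {f. \<exists>c. f = (\<lambda>_. c)}" by blast
  qed
next
  show "{f. \<exists>c. f = (\<lambda>_::'a. c)} \<subseteq> poly_rv_deg d X 0"
  proof
    fix f :: "'a \<Rightarrow> complex" assume "f \<in> {f. \<exists>c. f = (\<lambda>_::'a. c)}"
    then obtain c where c: "f = (\<lambda>_. c)" by blast
    show "f \<in> poly_rv_deg d X 0" unfolding poly_rv_deg_def
      by (rule CollectI, rule exI[of _ "{\<lambda>_. 0}"], rule exI[of _ "\<lambda>_. c"]) (simp add: c mono_zero)
  qed
qed

definition aff :: "nat \<Rightarrow> (nat \<Rightarrow> 'a \<Rightarrow> real) \<Rightarrow> ('a \<Rightarrow> complex) set" where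
  "aff d X = {f. \<exists>c0 c. f = (\<lambda>\<omega>. c0 + (\<Sum>k<d. c k * complex_of_real (X k \<omega>)))}"

lemma aff_sum:
  assumes "finite A" "\<And>a. a \<in> A \<Longrightarrow> g a \<in> aff d X"
  shows "(\<lambda>\<omega>. \<Sum>a\<in>A. g a \<omega>) \<in> aff d X"
  using assms
proof (induction A rule: finite_induct)
  case empty
  show ?case unfolding aff_def by (rule CollectI, rule exI[of _ 0], rule exI[of _ "\<lambda>_. 0"]) simp
next
  case (insert a A)
  then have "(\<lambda>\<omega>. \<Sum>a\<in>A. g a \<omega>) \<in> aff d X" by blast
  then obtain c0 c where h1: "(\<lambda>\<omega>. \<Sum>a\<in>A. g a \<omega>) = (\<lambda>\<omega>. c0 + (\<Sum>k<d. c k * complex_of_real (X k \<omega>)))"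
    unfolding aff_def by blast
  have "g a \<in> aff d X" using insert by blast
  then obtain e0 e where h2: "g a = (\<lambda>\<omega>. e0 + (\<Sum>k<d. e k * complex_of_real (X k \<omega>)))"
    unfolding aff_def by blast
  have "(\<lambda>\<omega>. \<Sum>a\<in>insert a A. g a \<omega>) = (\<lambda>\<omega>. (e0 + c0) + (\<Sum>k<d. (e k + c k) * complex_of_real (X k \<omega>)))"
  proof
    fix \<omega>
    have "(\<Sum>a\<in>insert a A. g a \<omega>) = g a \<omega> + (\<Sum>a\<in>A. g a \<omega>)" using insert by simp
    also have "\<dots> = (e0 + (\<Sum>k<d. e k * complex_of_real (X k \<omega>))) + (c0 + (\<Sum>k<d. c k * complex_of_real (X k \<omega>)))"
      using fun_cong[OF h1, of \<omega>] h2 by simp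
    also have "\<dots> = (e0 + c0) + (\<Sum>k<d. (e k + c k) * complex_of_real (X k \<omega>))"
      by (simp add: algebra_simps sum.distrib)
    finally show "(\<Sum>a\<in>insert a A. g a \<omega>) = (e0 + c0) + (\<Sum>k<d. (e k + c k) * complex_of_real (X k \<omega>))" .
  qed
  then show ?case unfolding aff_def by (intro CollectI exI[of _ "e0+c0"] exI[of _ "\<lambda>k. e k + c k"]) simp
qed

lemma aff_scale: "f \<in> aff d X \<Longrightarrow> (\<lambda>\<omega>. a * f \<omega>) \<in> aff d X"
proof -
  assume "f \<in> aff d X"
  then obtain c0 c where h: "f = (\<lambda>\<omega>. c0 + (\<Sum>k<d. c k * complex_of_real (X k \<omega>)))"
    unfolding aff_def by blast
  have "(\<lambda>\<omega>. a * f \<omega>) = (\<lambda>\<omega>. a * c0 + (\<Sum>k<d. (a * c k) * complex_of_real (X k \<omega>)))"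
    by (simp add: h fun_eq_iff algebra_simps sum_distrib_left)
  then show ?thesis unfolding aff_def by (intro CollectI exI[of _ "a*c0"] exI[of _ "\<lambda>k. a * c k"]) simp
qed

lemma F1_sub: "poly_rv_deg d X 1 \<subseteq> aff d X"
proof
  fix f assume "f \<in> poly_rv_deg d X 1"
  then obtain A c where A: "finite A" "\<forall>\<alpha>\<in>A. (\<Sum>i<d. \<alpha> i) \<le> 1" "f = (\<lambda>\<omega>. \<Sum>\<alpha>\<in>A. c \<alpha> * mono_rv d X \<alpha> \<omega>)"
    unfolding poly_rv_deg_def by blast
  have "mono_rv d X \<alpha> \<in> aff d X" if "\<alpha> \<in> A" for \<alpha>
  proof -
    from mono_le1[where d=d and \<alpha>=\<alpha> and X=X] A(2) that
    consider "mono_rv d X \<alpha> = (\<lambda>_. 1)" | k where "k < d" "mono_rv d X \<alpha> = (\<lambda>\<omega>. complex_of_real (X k \<omega>))"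
      by blast
    then show ?thesis
    proof cases
      case 1
      show ?thesis unfolding 1 aff_def by (rule CollectI, rule exI[of _ 1], rule exI[of _ "\<lambda>_. 0"]) simp
    next
      case (2 k)
      have "(\<lambda>\<omega>. complex_of_real (X k \<omega>)) = (\<lambda>\<omega>. 0 + (\<Sum>i<d. (if i = k then 1 else 0) * complex_of_real (X i \<omega>)))"
      proof
        fix \<omega>
        have "(\<Sum>i<d. (if i = k then 1 else 0) * complex_of_real (X i \<omega>)) = (\<Sum>i<d. if i = k then complex_of_real (X i \<omega>) else 0)"
          by (rule sum.cong) auto
        then show "complex_of_real (X k \<omega>) = 0 + (\<Sum>i<d. (if i = k then 1 else 0) * complex_of_real (X i \<omega>))"
          using 2(1) by (simp add: sum.delta)
      qed
      then show ?thesis unfolding 2(2) aff_def by (intro CollectI exI[of _ 0] exI[of _ "\<lambda>i. if i = k then 1 else 0"]) simp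
    qed
  qed
  then show "f \<in> aff d X" unfolding A(3)
    by (intro aff_sum A(1) aff_scale)
qed

lemma F1_sup: "aff d X \<subseteq> poly_rv_deg d X 1"
proof
  fix f assume "f \<in> aff d X"
  then obtain c0 c where h: "f = (\<lambda>\<omega>. c0 + (\<Sum>k<d. c k * complex_of_real (X k \<omega>)))"
    unfolding aff_def by blast
  define e :: "nat \<Rightarrow> nat \<Rightarrow> nat" where "e k = (\<lambda>i. if i = k then 1 else 0)" for k
  have inj: "inj e" unfolding e_def inj_def by (metis one_neq_zero)
  have ne: "(\<lambda>_. 0) \<notin> e ` {..<d}" unfolding e_def by (auto simp: fun_eq_iff) (metis one_neq_zero)
  define A where "A = insert (\<lambda>_. 0) (e ` {..<d})"
  define cc where "cc \<alpha> = (if \<alpha> = (\<lambda>_. 0) then c0 else c (inv e \<alpha>))" for \<alpha>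
  have "(\<lambda>\<omega>. \<Sum>\<alpha>\<in>A. cc \<alpha> * mono_rv d X \<alpha> \<omega>) = f"
  proof
    fix \<omega>
    have "(\<Sum>\<alpha>\<in>A. cc \<alpha> * mono_rv d X \<alpha> \<omega>) = cc (\<lambda>_. 0) * mono_rv d X (\<lambda>_. 0) \<omega> + (\<Sum>\<alpha>\<in>e ` {..<d}. cc \<alpha> * mono_rv d X \<alpha> \<omega>)"
      unfolding A_def using ne by simp
    also have "(\<Sum>\<alpha>\<in>e ` {..<d}. cc \<alpha> * mono_rv d X \<alpha> \<omega>) = (\<Sum>k<d. cc (e k) * mono_rv d X (e k) \<omega>)"
      by (subst sum.reindex) (use inj in \<open>auto intro: inj_on_subset\<close>)
    also have "\<dots> = (\<Sum>k<d. c k * complex_of_real (X k \<omega>))"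
    proof (rule sum.cong)
      fix k assume "k \<in> {..<d}"
      moreover have "e k \<noteq> (\<lambda>_. 0)" unfolding e_def by (auto simp: fun_eq_iff)
      ultimately show "cc (e k) * mono_rv d X (e k) \<omega> = c k * complex_of_real (X k \<omega>)"
        unfolding cc_def using inv_f_f[OF inj] mono_ind[of k d X] by (simp add: e_def)
    qed simp
    finally show "(\<Sum>\<alpha>\<in>A. cc \<alpha> * mono_rv d X \<alpha> \<omega>) = f \<omega>" by (simp add: h mono_zero cc_def)
  qed
  moreover have "finite A" "\<forall>\<alpha>\<in>A. (\<Sum>i<d. \<alpha> i) \<le> 1"
    unfolding A_def e_def by (auto simp: sum.delta)
  ultimately show "f \<in> poly_rv_deg d X 1" unfolding poly_rv_deg_def by blast
qed

lemma F1_char: "poly_rv_deg d X 1 = aff d X"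
  using F1_sub F1_sup by blast



lemma abs3: "abs ((x::real) * y * z) \<le> abs x ^ 3 + abs y ^ 3 + abs z ^ 3"
proof -
  define m where "m = max (abs x) (max (abs y) (abs z))"
  have "abs (x * y * z) = abs x * abs y * abs z" by (simp add: abs_mult)
  also have "\<dots> \<le> m * m * m"
    by (intro mult_mono) (auto simp: m_def)
  also have "\<dots> = m^3" by (simp add: power3_eq_cube)
  also have "\<dots> \<le> abs x ^ 3 + abs y ^ 3 + abs z ^ 3"
  proof -
    have "m = abs x \<or> m = abs y \<or> m = abs z" unfolding m_def by (auto simp: max_def)
    then show ?thesis by auto
  qed
  finally show ?thesis .
qed

lemma ab2: "abs (a * b) \<le> abs a ^ 2 + abs b ^ 2" for a b :: real
proof -
  have "abs (a * b) = abs a * abs b" by (simp add: abs_mult)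
  also have "\<dots> \<le> max (abs a) (abs b) * max (abs a) (abs b)" by (intro mult_mono) auto
  also have "\<dots> \<le> abs a ^ 2 + abs b ^ 2" by (auto simp: max_def power2_eq_square)
  finally show ?thesis .
qed

locale mx = prob_space M for M :: "'a measure" +
  fixes d :: nat and X :: "nat \<Rightarrow> 'a \<Rightarrow> real"
  assumes meas: "\<forall>i<d. X i \<in> borel_measurable M"
    and mom: "\<forall>i<d. \<forall>n::nat. integrable M (\<lambda>\<omega>. \<bar>X i \<omega>\<bar> ^ n)"
    and mean0: "\<forall>k<d. (LINT \<omega>|M. X k \<omega>) = 0"
    and cov: "\<forall>i<d. \<forall>j<d. (LINT \<omega>|M. X i \<omega> * X j \<omega>) = (if i = j then 1 else 0)"
begin

lemma momi: "i < d \<Longrightarrow> integrable M (\<lambda>\<omega>. abs (X i \<omega>) ^ n)"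
  using mom by blast

lemma measi: "i < d \<Longrightarrow> X i \<in> borel_measurable M"
  using meas by blast

lemma int1: "i < d \<Longrightarrow> integrable M (X i)"
proof -
  assume h: "i < d"
  have "integrable M (\<lambda>\<omega>. abs (X i \<omega>))" using momi[OF h, of 1] by simp
  then show ?thesis using integrable_abs_iff[OF measi[OF h]] by simp
qed

lemma int3: "i < d \<Longrightarrow> j < d \<Longrightarrow> k < d \<Longrightarrow> integrable M (\<lambda>\<omega>. X i \<omega> * X j \<omega> * X k \<omega>)"
proof -
  assume h: "i < d" "j < d" "k < d"
  have "integrable M (\<lambda>\<omega>. abs (X i \<omega>) ^ 3 + abs (X j \<omega>) ^ 3 + abs (X k \<omega>) ^ 3)"
    by (intro Bochner_Integration.integrable_add momi h)
  then show ?thesis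
  proof (rule Bochner_Integration.integrable_bound)
    show "(\<lambda>\<omega>. X i \<omega> * X j \<omega> * X k \<omega>) \<in> borel_measurable M"
      using h by (intro borel_measurable_times measi)
    show "AE x in M. norm (X i x * X j x * X k x) \<le> norm (abs (X i x) ^ 3 + abs (X j x) ^ 3 + abs (X k x) ^ 3)"
    proof (intro AE_I2)
      fix x
      have "norm (abs (X i x) ^ 3 + abs (X j x) ^ 3 + abs (X k x) ^ 3) = abs (X i x) ^ 3 + abs (X j x) ^ 3 + abs (X k x) ^ 3"
        by simp
      then show "norm (X i x * X j x * X k x) \<le> norm (abs (X i x) ^ 3 + abs (X j x) ^ 3 + abs (X k x) ^ 3)"
        using abs3[of "X i x" "X j x" "X k x"] by simp
    qed
  qed
qed

lemma int2: "i < d \<Longrightarrow> j < d \<Longrightarrow> integrable M (\<lambda>\<omega>. X i \<omega> * X j \<omega>)"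
proof -
  assume h: "i < d" "j < d"
  have "integrable M (\<lambda>\<omega>. abs (X i \<omega>) ^ 2 + abs (X j \<omega>) ^ 2)"
    by (intro Bochner_Integration.integrable_add momi h)
  then show ?thesis
  proof (rule Bochner_Integration.integrable_bound)
    show "(\<lambda>\<omega>. X i \<omega> * X j \<omega>) \<in> borel_measurable M"
      using h by (intro borel_measurable_times measi)
    show "AE x in M. norm (X i x * X j x) \<le> norm (abs (X i x) ^ 2 + abs (X j x) ^ 2)"
    proof (intro AE_I2)
      fix x
      have "norm (abs (X i x) ^ 2 + abs (X j x) ^ 2) = abs (X i x) ^ 2 + abs (X j x) ^ 2"
        by simp
      then show "norm (X i x * X j x) \<le> norm (abs (X i x) ^ 2 + abs (X j x) ^ 2)"
        using ab2[of "X i x" "X j x"] by simp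
    qed
  qed
qed


lemma pr1[simp]: "measure M (space M) = 1"
  using prob_space.prob_space[OF prob_space_axioms] .

lemma int_const_c[simp]: "(LINT \<omega>|M. (c::complex)) = c"
  by simp

lemma intXX[simp]: "k < d \<Longrightarrow> l < d \<Longrightarrow> integrable M (\<lambda>\<omega>. c * (complex_of_real (X k \<omega>) * complex_of_real (X l \<omega>)))"
proof -
  assume h: "k < d" "l < d"
  have "integrable M (\<lambda>\<omega>. c * complex_of_real (X k \<omega> * X l \<omega>))"
    using int2[OF h] by (intro Bochner_Integration.integrable_mult_right integrable_of_real)
  then show ?thesis by simp
qed

lemma intX[simp]: "k < d \<Longrightarrow> integrable M (\<lambda>\<omega>. c * complex_of_real (X k \<omega>))"
  using int1 by auto

lemma lint_lin: "(LINT \<omega>|M. (\<Sum>k<d. c k * complex_of_real (X k \<omega>))) = 0"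
proof -
  have "(LINT \<omega>|M. (\<Sum>k<d. c k * complex_of_real (X k \<omega>))) = (\<Sum>k<d. LINT \<omega>|M. c k * complex_of_real (X k \<omega>))"
    by (rule Bochner_Integration.integral_sum) simp
  also have "\<dots> = 0" using mean0 by simp
  finally show ?thesis .
qed

lemma int_lin[simp]: "integrable M (\<lambda>\<omega>. (\<Sum>k<d. c k * complex_of_real (X k \<omega>)))"
  by (rule Bochner_Integration.integrable_sum) simp

lemma G0_char: "G_space M d X 0 = {f. \<exists>c. f = (\<lambda>_. c)}"
  unfolding G_space_def by (simp add: F0_char)

lemma G1_char: "G_space M d X 1 = {f. \<exists>c. f = (\<lambda>\<omega>. \<Sum>k<d. c k * complex_of_real (X k \<omega>))}"
proof (intro set_eqI iffI)
  fix f assume f: "f \<in> G_space M d X 1"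
  then have "f \<in> aff d X" unfolding G_space_def F1_char by simp
  then obtain c0 c where h: "f = (\<lambda>\<omega>. c0 + (\<Sum>k<d. c k * complex_of_real (X k \<omega>)))"
    unfolding aff_def by blast
  have "(\<lambda>_. 1) \<in> poly_rv_deg d X 0" unfolding F0_char by blast
  then have "ip M f (\<lambda>_. 1) = 0" using f unfolding G_space_def by simp
  moreover have "ip M f (\<lambda>_. 1) = c0"
  proof -
    have "ip M f (\<lambda>_. 1) = (LINT \<omega>|M. c0 + (\<Sum>k<d. c k * complex_of_real (X k \<omega>)))"
      unfolding ip_def h by simp
    also have "\<dots> = c0 + (LINT \<omega>|M. (\<Sum>k<d. c k * complex_of_real (X k \<omega>)))"
      by (subst Bochner_Integration.integral_add) auto
    finally show ?thesis using lint_lin by (simp add: prob_space)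
  qed
  ultimately have "c0 = 0" by simp
  then show "f \<in> {f. \<exists>c. f = (\<lambda>\<omega>. \<Sum>k<d. c k * complex_of_real (X k \<omega>))}" using h by auto
next
  fix f assume "f \<in> {f. \<exists>c. f = (\<lambda>\<omega>. \<Sum>k<d. c k * complex_of_real (X k \<omega>))}"
  then obtain c where h: "f = (\<lambda>\<omega>. \<Sum>k<d. c k * complex_of_real (X k \<omega>))" by blast
  have "f \<in> aff d X" unfolding aff_def h by (intro CollectI exI[of _ 0] exI[of _ c]) simp
  moreover have "ip M f g = 0" if gin: "g \<in> poly_rv_deg d X 0" for g
  proof -
    obtain e where "g = (\<lambda>_. e)" using gin unfolding F0_char by blast
    then show ?thesis unfolding ip_def h using lint_lin by simp
  qed
  ultimately show "f \<in> G_space M d X 1" unfolding G_space_def F1_char by simp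
qed

lemma P0:
  assumes "integrable M f"
  shows "proj_G M d X 0 f = (\<lambda>_. LINT \<omega>|M. f \<omega>)"
  unfolding proj_G_def
proof (rule some_equality)
  show "(\<lambda>_. LINT \<omega>|M. f \<omega>) \<in> G_space M d X 0 \<and>
    (\<forall>h\<in>G_space M d X 0. ip M (\<lambda>\<omega>. f \<omega> - (LINT \<omega>|M. f \<omega>)) h = 0)"
    unfolding G0_char ip_def using assms by (auto simp: prob_space)
next
  fix g assume g: "g \<in> G_space M d X 0 \<and> (\<forall>h\<in>G_space M d X 0. ip M (\<lambda>\<omega>. f \<omega> - g \<omega>) h = 0)"
  then obtain c where c: "g = (\<lambda>_. c)" unfolding G0_char by blast
  have "(\<lambda>_. 1) \<in> G_space M d X 0" unfolding G0_char by blast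
  then have "ip M (\<lambda>\<omega>. f \<omega> - g \<omega>) (\<lambda>_. 1) = 0" using g by blast
  then have "(LINT \<omega>|M. f \<omega>) - c = 0" unfolding ip_def c using assms by simp
  then show "g = (\<lambda>_. LINT \<omega>|M. f \<omega>)" using c by simp
qed

lemma orth:
  assumes f: "integrable M f" and fX: "\<And>l. l < d \<Longrightarrow> integrable M (\<lambda>\<omega>. f \<omega> * complex_of_real (X l \<omega>))"
    and l: "l < d"
  shows "(LINT \<omega>|M. (f \<omega> - (\<Sum>k<d. c k * complex_of_real (X k \<omega>))) * complex_of_real (X l \<omega>))
        = (LINT \<omega>|M. f \<omega> * complex_of_real (X l \<omega>)) - c l"
proof -
  have eq: "(f \<omega> - (\<Sum>k<d. c k * complex_of_real (X k \<omega>))) * complex_of_real (X l \<omega>)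
     = f \<omega> * complex_of_real (X l \<omega>) - (\<Sum>k<d. c k * complex_of_real (X k \<omega> * X l \<omega>))" for \<omega>
  proof -
    have "(\<Sum>k<d. c k * complex_of_real (X k \<omega>)) * complex_of_real (X l \<omega>) = (\<Sum>k<d. c k * complex_of_real (X k \<omega> * X l \<omega>))"
      by (simp add: sum_distrib_right mult.assoc)
    then show ?thesis by (simp add: left_diff_distrib)
  qed
  have ik: "\<And>k. k \<in> {..<d} \<Longrightarrow> integrable M (\<lambda>\<omega>. c k * complex_of_real (X k \<omega> * X l \<omega>))"
    using int2 l by auto
  have "(LINT \<omega>|M. (\<Sum>k<d. c k * complex_of_real (X k \<omega> * X l \<omega>))) = (\<Sum>k<d. LINT \<omega>|M. c k * complex_of_real (X k \<omega> * X l \<omega>))"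
    by (rule Bochner_Integration.integral_sum) (rule ik)
  also have "\<dots> = (\<Sum>k<d. c k * (if k = l then 1 else 0))"
  proof (rule sum.cong)
    fix k assume k: "k \<in> {..<d}"
    have cc: "(LINT \<omega>|M. X k \<omega> * X l \<omega>) = (if k = l then 1 else 0)" using cov k l by simp
    show "(LINT \<omega>|M. c k * complex_of_real (X k \<omega> * X l \<omega>)) = c k * (if k = l then 1 else 0)"
      unfolding integral_mult_right_zero integral_complex_of_real cc by simp
  qed simp
  also have "\<dots> = (\<Sum>k<d. if k = l then c k else 0)" by (rule sum.cong) auto
  also have "\<dots> = c l" using l by (simp add: sum.delta)
  finally have s: "(LINT \<omega>|M. (\<Sum>k<d. c k * complex_of_real (X k \<omega> * X l \<omega>))) = c l" .
  have "integrable M (\<lambda>\<omega>. (\<Sum>k<d. c k * complex_of_real (X k \<omega> * X l \<omega>)))"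
    by (rule Bochner_Integration.integrable_sum) (rule ik)
  then show ?thesis unfolding eq using fX[OF l] s by simp
qed

lemma P1:
  assumes f: "integrable M f" and fX: "\<And>l. l < d \<Longrightarrow> integrable M (\<lambda>\<omega>. f \<omega> * complex_of_real (X l \<omega>))"
  shows "proj_G M d X 1 f = (\<lambda>\<omega>. \<Sum>k<d. (LINT \<omega>'|M. f \<omega>' * complex_of_real (X k \<omega>')) * complex_of_real (X k \<omega>))"
  unfolding proj_G_def
proof (rule some_equality)
  define e where "e k = (LINT \<omega>'|M. f \<omega>' * complex_of_real (X k \<omega>'))" for k
  show "(\<lambda>\<omega>. \<Sum>k<d. (LINT \<omega>'|M. f \<omega>' * complex_of_real (X k \<omega>')) * complex_of_real (X k \<omega>)) \<in> G_space M d X 1 \<and>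
    (\<forall>h\<in>G_space M d X 1. ip M (\<lambda>\<omega>. f \<omega> - (\<Sum>k<d. (LINT \<omega>'|M. f \<omega>' * complex_of_real (X k \<omega>')) * complex_of_real (X k \<omega>))) h = 0)"
    unfolding e_def[symmetric]
  proof
    show "(\<lambda>\<omega>. \<Sum>k<d. e k * complex_of_real (X k \<omega>)) \<in> G_space M d X 1"
      unfolding G1_char by blast
    show "\<forall>h\<in>G_space M d X 1. ip M (\<lambda>\<omega>. f \<omega> - (\<Sum>k<d. e k * complex_of_real (X k \<omega>))) h = 0"
    proof
      fix h assume "h \<in> G_space M d X 1"
      then obtain c where c: "h = (\<lambda>\<omega>. \<Sum>k<d. c k * complex_of_real (X k \<omega>))" unfolding G1_char by blast
      define r where "r \<omega> = f \<omega> - (\<Sum>k<d. e k * complex_of_real (X k \<omega>))" for \<omega>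
      have eq: "r \<omega> * cnj (h \<omega>) = (\<Sum>l<d. cnj (c l) * (r \<omega> * complex_of_real (X l \<omega>)))" for \<omega>
        unfolding c by (simp add: sum_distrib_left algebra_simps)
      have ir: "integrable M (\<lambda>\<omega>. r \<omega> * complex_of_real (X l \<omega>))" if "l < d" for l
      proof -
        have "(\<lambda>\<omega>. r \<omega> * complex_of_real (X l \<omega>)) = (\<lambda>\<omega>. f \<omega> * complex_of_real (X l \<omega>) - (\<Sum>k<d. e k * complex_of_real (X k \<omega> * X l \<omega>)))"
        proof
          fix \<omega>
          have "(\<Sum>k<d. e k * complex_of_real (X k \<omega>)) * complex_of_real (X l \<omega>) = (\<Sum>k<d. e k * complex_of_real (X k \<omega> * X l \<omega>))"
            by (simp add: sum_distrib_right mult.assoc)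
          then show "r \<omega> * complex_of_real (X l \<omega>) = f \<omega> * complex_of_real (X l \<omega>) - (\<Sum>k<d. e k * complex_of_real (X k \<omega> * X l \<omega>))"
            unfolding r_def by (simp add: left_diff_distrib)
        qed
        moreover have "integrable M (\<lambda>\<omega>. (\<Sum>k<d. e k * complex_of_real (X k \<omega> * X l \<omega>)))"
          by (rule Bochner_Integration.integrable_sum) (use int2 that in auto)
        ultimately show ?thesis using fX[OF that] by simp
      qed
      have "ip M (\<lambda>\<omega>. f \<omega> - (\<Sum>k<d. e k * complex_of_real (X k \<omega>))) h = (LINT \<omega>|M. r \<omega> * cnj (h \<omega>))"
        unfolding ip_def r_def by simp
      also have "\<dots> = (LINT \<omega>|M. (\<Sum>l<d. cnj (c l) * (r \<omega> * complex_of_real (X l \<omega>))))"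
        unfolding eq by simp
      also have "\<dots> = (\<Sum>l<d. LINT \<omega>|M. cnj (c l) * (r \<omega> * complex_of_real (X l \<omega>)))"
        by (rule Bochner_Integration.integral_sum) (use ir in auto)
      also have "\<dots> = (\<Sum>l<d. cnj (c l) * 0)"
      proof (rule sum.cong)
        fix l assume "l \<in> {..<d}"
        then have "(LINT \<omega>|M. r \<omega> * complex_of_real (X l \<omega>)) = 0"
          unfolding r_def using orth[OF f fX, of l e] e_def by simp
        then show "(LINT \<omega>|M. cnj (c l) * (r \<omega> * complex_of_real (X l \<omega>))) = cnj (c l) * 0" by simp
      qed simp
      finally show "ip M (\<lambda>\<omega>. f \<omega> - (\<Sum>k<d. e k * complex_of_real (X k \<omega>))) h = 0" by simp
    qed
  qed
next
  fix g assume g: "g \<in> G_space M d X 1 \<and> (\<forall>h\<in>G_space M d X 1. ip M (\<lambda>\<omega>. f \<omega> - g \<omega>) h = 0)"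
  then obtain c where c: "g = (\<lambda>\<omega>. \<Sum>k<d. c k * complex_of_real (X k \<omega>))" unfolding G1_char by blast
  have "c l = (LINT \<omega>'|M. f \<omega>' * complex_of_real (X l \<omega>'))" if l: "l < d" for l
  proof -
    have "(\<lambda>\<omega>. complex_of_real (X l \<omega>)) = (\<lambda>\<omega>. \<Sum>k<d. (if k = l then 1 else 0) * complex_of_real (X k \<omega>))"
    proof
      fix \<omega>
      have "(\<Sum>k<d. (if k = l then 1 else 0) * complex_of_real (X k \<omega>)) = (\<Sum>k<d. if k = l then complex_of_real (X k \<omega>) else 0)"
        by (rule sum.cong) auto
      then show "complex_of_real (X l \<omega>) = (\<Sum>k<d. (if k = l then 1 else 0) * complex_of_real (X k \<omega>))"
        using l by (simp add: sum.delta)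
    qed
    then have "(\<lambda>\<omega>. complex_of_real (X l \<omega>)) \<in> G_space M d X 1" unfolding G1_char
      by (intro CollectI exI[of _ "\<lambda>k. if k = l then 1 else (0::complex)"])
    then have "ip M (\<lambda>\<omega>. f \<omega> - g \<omega>) (\<lambda>\<omega>. complex_of_real (X l \<omega>)) = 0" using g by blast
    then have "(LINT \<omega>|M. (f \<omega> - (\<Sum>k<d. c k * complex_of_real (X k \<omega>))) * complex_of_real (X l \<omega>)) = 0"
      unfolding ip_def c by simp
    then show ?thesis using orth[OF f fX l, of c] by simp
  qed
  then show "g = (\<lambda>\<omega>. \<Sum>k<d. (LINT \<omega>'|M. f \<omega>' * complex_of_real (X k \<omega>')) * complex_of_real (X k \<omega>))"
    unfolding c by (auto simp: fun_eq_iff intro!: sum.cong)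
qed

end


definition m3 :: "'a measure \<Rightarrow> (nat \<Rightarrow> 'a \<Rightarrow> real) \<Rightarrow> nat \<Rightarrow> nat \<Rightarrow> nat \<Rightarrow> real" where
  "m3 M X i j k = (LINT \<omega>|M. X i \<omega> * X j \<omega> * X k \<omega>)"

context mx
begin

lemma mult1: "mult_op X j (\<lambda>_. 1) = (\<lambda>\<omega>. complex_of_real (X j \<omega>))"
  by (simp add: mult_op_def)

lemma one_F0: "(\<lambda>_. 1) \<in> poly_rv_deg d X 0"
  unfolding F0_char by blast

lemma deg_one: "poly_degree d X (\<lambda>_. 1) = 0"
  unfolding poly_degree_def using one_F0 by (simp add: Least_eq_0)

lemma sumdelta: "l < d \<Longrightarrow> (\<Sum>k<d. (if k = l then 1 else 0) * (a k :: complex)) = a l"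
proof -
  assume l: "l < d"
  have "(\<Sum>k<d. (if k = l then 1 else 0) * a k) = (\<Sum>k<d. if k = l then a k else 0)"
    by (rule sum.cong) auto
  then show ?thesis using l by (simp add: sum.delta)
qed

lemma sumdelta': "l < d \<Longrightarrow> (\<Sum>k<d. (if l = k then 1 else 0) * (a k :: complex)) = a l"
  using sumdelta[of l a] by (simp add: eq_commute)

lemma Xj_F1: "j < d \<Longrightarrow> (\<lambda>\<omega>. complex_of_real (X j \<omega>)) \<in> poly_rv_deg d X 1"
  unfolding F1_char aff_def
  by (intro CollectI exI[of _ 0] exI[of _ "\<lambda>k. if k = j then 1 else (0::complex)"]) (simp add: sumdelta fun_eq_iff)

lemma Xj_notF0: "j < d \<Longrightarrow> (\<lambda>\<omega>. complex_of_real (X j \<omega>)) \<notin> poly_rv_deg d X 0"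
proof
  assume j: "j < d" and "(\<lambda>\<omega>. complex_of_real (X j \<omega>)) \<in> poly_rv_deg d X 0"
  then obtain c where c: "(\<lambda>\<omega>. complex_of_real (X j \<omega>)) = (\<lambda>_. c)" unfolding F0_char by blast
  have x: "X j \<omega> = Re c" for \<omega>
  proof -
    have h: "complex_of_real (X j \<omega>) = c" using fun_cong[OF c, of \<omega>] by simp
    show ?thesis using arg_cong[where f=Re, OF h] by simp
  qed
  then have xf: "X j = (\<lambda>_. Re c)" by (intro ext)
  have "(LINT \<omega>|M. X j \<omega>) = Re c" unfolding xf by simp
  then have "Re c = 0" using mean0 j by simp
  then have "(LINT \<omega>|M. X j \<omega> * X j \<omega>) = 0" using x by simp
  then show False using cov j by auto
qed

lemma deg_Xj: "j < d \<Longrightarrow> poly_degree d X (\<lambda>\<omega>. complex_of_real (X j \<omega>)) = 1"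
  unfolding poly_degree_def
proof (rule Least_equality)
  assume j: "j < d"
  show "(\<lambda>\<omega>. complex_of_real (X j \<omega>)) \<in> poly_rv_deg d X 1" using Xj_F1[OF j] .
  fix n assume "(\<lambda>\<omega>. complex_of_real (X j \<omega>)) \<in> poly_rv_deg d X n"
  then show "1 \<le> n" using Xj_notF0[OF j] by (cases n) auto
qed

lemma E2: "i < d \<Longrightarrow> j < d \<Longrightarrow> (LINT \<omega>|M. complex_of_real (X i \<omega>) * complex_of_real (X j \<omega>)) = (if i = j then 1 else 0)"
proof -
  assume h: "i < d" "j < d"
  have "(LINT \<omega>|M. complex_of_real (X i \<omega>) * complex_of_real (X j \<omega>)) = complex_of_real (LINT \<omega>|M. X i \<omega> * X j \<omega>)"
    unfolding of_real_mult[symmetric] integral_complex_of_real ..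
  then show ?thesis using cov h by simp
qed

lemma intC1[simp]: "j < d \<Longrightarrow> integrable M (\<lambda>\<omega>. complex_of_real (X j \<omega>))"
  using int1 by auto

lemma intC2[simp]: "i < d \<Longrightarrow> j < d \<Longrightarrow> integrable M (\<lambda>\<omega>. complex_of_real (X i \<omega>) * complex_of_real (X j \<omega>))"
  using intXX[of i j 1] by simp

lemma intC3[simp]: "i < d \<Longrightarrow> j < d \<Longrightarrow> k < d \<Longrightarrow>
   integrable M (\<lambda>\<omega>. complex_of_real (X i \<omega>) * complex_of_real (X j \<omega>) * complex_of_real (X k \<omega>))"
proof -
  assume h: "i < d" "j < d" "k < d"
  have "integrable M (\<lambda>\<omega>. complex_of_real (X i \<omega> * X j \<omega> * X k \<omega>))"
    using int3[OF h] by (rule integrable_of_real)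
  then show ?thesis by simp
qed

lemma semi_one: "i < d \<Longrightarrow> semi_ann M d X i (\<lambda>_. 1) = (\<lambda>_. 0)"
proof -
  assume i: "i < d"
  have a: "ann_op M d X i (\<lambda>_. 1) = (\<lambda>_. 0)"
    unfolding ann_op_def deg_one by simp
  have p1: "proj_G M d X 0 (\<lambda>_. 1) = (\<lambda>_. 1)" by (subst P0) auto
  have "pres_op M d X i (\<lambda>_. 1) = proj_G M d X 0 (mult_op X i (proj_G M d X 0 (\<lambda>_. 1)))"
    unfolding pres_op_def deg_one by simp
  also have "\<dots> = (\<lambda>_. 0)" unfolding p1 mult1 using i mean0 by (subst P0) auto
  finally show ?thesis using a unfolding semi_ann_def by simp
qed



lemma semi_Xj: "i < d \<Longrightarrow> j < d \<Longrightarrow> semi_ann M d X i (\<lambda>\<omega>. complex_of_real (X j \<omega>)) =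
   (\<lambda>\<omega>. (if i = j then 1 else 0) + 1/2 * (\<Sum>k<d. complex_of_real (m3 M X i j k) * complex_of_real (X k \<omega>)))"
proof -
  assume i: "i < d" and j: "j < d"
  let ?Xj = "\<lambda>\<omega>. complex_of_real (X j \<omega>)"
  have p1: "proj_G M d X 1 ?Xj = ?Xj"
  proof -
    have "proj_G M d X 1 ?Xj = (\<lambda>\<omega>. \<Sum>k<d. (LINT \<omega>'|M. complex_of_real (X j \<omega>') * complex_of_real (X k \<omega>')) * complex_of_real (X k \<omega>))"
      by (rule P1) (use j in auto)
    also have "\<dots> = (\<lambda>\<omega>. \<Sum>k<d. (if j = k then 1 else 0) * complex_of_real (X k \<omega>))"
      by (intro ext sum.cong refl) (use j E2 in auto)
    also have "\<dots> = ?Xj" using j by (simp add: sumdelta' fun_eq_iff)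
    finally show ?thesis .
  qed
  have p0: "proj_G M d X 0 ?Xj = (\<lambda>_. 0)"
    using j mean0 by (subst P0) auto
  have a: "ann_op M d X i ?Xj = (\<lambda>_. if i = j then 1 else 0)"
  proof -
    have "ann_op M d X i ?Xj = proj_G M d X 0 (mult_op X i (proj_G M d X 1 ?Xj))"
      unfolding ann_op_def deg_Xj[OF j] by simp
    also have "\<dots> = (\<lambda>_. if i = j then 1 else 0)"
      unfolding p1 mult_op_def using i j E2 by (subst P0) auto
    finally show ?thesis .
  qed
  have q0: "proj_G M d X 0 (mult_op X i (proj_G M d X 0 ?Xj)) = (\<lambda>_. 0)"
    unfolding p0 mult_op_def by (subst P0) auto
  have q1: "proj_G M d X 1 (mult_op X i (proj_G M d X 1 ?Xj)) = (\<lambda>\<omega>. \<Sum>k<d. complex_of_real (m3 M X i j k) * complex_of_real (X k \<omega>))"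
  proof -
    have "proj_G M d X 1 (mult_op X i (proj_G M d X 1 ?Xj)) =
      (\<lambda>\<omega>. \<Sum>k<d. (LINT \<omega>'|M. complex_of_real (X i \<omega>') * complex_of_real (X j \<omega>') * complex_of_real (X k \<omega>')) * complex_of_real (X k \<omega>))"
      unfolding p1 mult_op_def by (rule P1) (use i j in auto)
    also have "\<dots> = (\<lambda>\<omega>. \<Sum>k<d. complex_of_real (m3 M X i j k) * complex_of_real (X k \<omega>))"
    proof (intro ext sum.cong refl)
      fix \<omega> k
      have "(LINT \<omega>'|M. complex_of_real (X i \<omega>') * complex_of_real (X j \<omega>') * complex_of_real (X k \<omega>')) = complex_of_real (m3 M X i j k)"
        unfolding m3_def of_real_mult[symmetric] integral_complex_of_real ..
      then show "(LINT \<omega>'|M. complex_of_real (X i \<omega>') * complex_of_real (X j \<omega>') * complex_of_real (X k \<omega>')) * complex_of_real (X k \<omega>) =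
         complex_of_real (m3 M X i j k) * complex_of_real (X k \<omega>)" by simp
    qed
    finally show ?thesis .
  qed
  have "pres_op M d X i ?Xj = (\<lambda>\<omega>. proj_G M d X 0 (mult_op X i (proj_G M d X 0 ?Xj)) \<omega> + proj_G M d X 1 (mult_op X i (proj_G M d X 1 ?Xj)) \<omega>)"
    unfolding pres_op_def deg_Xj[OF j] by (simp add: atLeast0_atMost_Suc add.commute)
  also have "\<dots> = (\<lambda>\<omega>. \<Sum>k<d. complex_of_real (m3 M X i j k) * complex_of_real (X k \<omega>))"
    unfolding q0 q1 by simp
  finally show ?thesis unfolding semi_ann_def a by simp
qed


lemma alpha_eq:
  assumes meix: "one_Meixner_with M d X \<alpha> \<beta>"
    and nondeg: "non_degenerate M d X"
    and i: "i < d" and j: "j < d" and k: "k < d"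
  shows "\<alpha> i j k = m3 M X i j k / 2"
proof -
  have one: "(\<lambda>_. 1) \<in> poly_rv d X" unfolding poly_rv_def using one_F0 by blast
  have "AE \<omega> in M. semi_ann M d X i (mult_op X j (\<lambda>_. 1)) \<omega> - complex_of_real (X j \<omega>) * semi_ann M d X i (\<lambda>_. 1) \<omega>
        = (\<Sum>k<d. complex_of_real (\<alpha> i j k) * complex_of_real (X k \<omega>)) * 1 + complex_of_real (\<beta> i j) * 1"
    using meix i j one unfolding one_Meixner_with_def by blast
  then have ae: "AE \<omega> in M. (if i = j then 1 else 0) + 1/2 * (\<Sum>k<d. complex_of_real (m3 M X i j k) * complex_of_real (X k \<omega>))
        = (\<Sum>k<d. complex_of_real (\<alpha> i j k) * complex_of_real (X k \<omega>)) + complex_of_real (\<beta> i j)"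
    unfolding mult1 semi_Xj[OF i j] semi_one[OF i] by simp
  define c0 :: complex where "c0 = (if i = j then 1 else 0) - complex_of_real (\<beta> i j)"
  define c :: "nat \<Rightarrow> complex" where "c k = complex_of_real (m3 M X i j k) / 2 - complex_of_real (\<alpha> i j k)" for k
  have ae2: "AE \<omega> in M. c0 + (\<Sum>k<d. c k * complex_of_real (X k \<omega>)) = 0"
    using ae
  proof (rule AE_mp, intro AE_I2 impI)
    fix \<omega>
    assume h: "(if i = j then 1 else 0) + 1/2 * (\<Sum>k<d. complex_of_real (m3 M X i j k) * complex_of_real (X k \<omega>))
        = (\<Sum>k<d. complex_of_real (\<alpha> i j k) * complex_of_real (X k \<omega>)) + complex_of_real (\<beta> i j)"
    have "c0 + (\<Sum>k<d. c k * complex_of_real (X k \<omega>)) =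
       ((if i = j then 1 else 0) + 1/2 * (\<Sum>k<d. complex_of_real (m3 M X i j k) * complex_of_real (X k \<omega>)))
        - ((\<Sum>k<d. complex_of_real (\<alpha> i j k) * complex_of_real (X k \<omega>)) + complex_of_real (\<beta> i j))"
    proof -
      have "(\<Sum>k<d. c k * complex_of_real (X k \<omega>)) = (\<Sum>k<d. 1/2 * (complex_of_real (m3 M X i j k) * complex_of_real (X k \<omega>)) - complex_of_real (\<alpha> i j k) * complex_of_real (X k \<omega>))"
        by (rule sum.cong) (simp_all add: c_def left_diff_distrib)
      also have "\<dots> = 1/2 * (\<Sum>k<d. complex_of_real (m3 M X i j k) * complex_of_real (X k \<omega>)) - (\<Sum>k<d. complex_of_real (\<alpha> i j k) * complex_of_real (X k \<omega>))"
        by (simp only: sum_subtractf sum_distrib_left)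
      finally show ?thesis unfolding c0_def by simp
    qed
    then show "c0 + (\<Sum>k<d. c k * complex_of_real (X k \<omega>)) = 0" using h by simp
  qed
  have "\<forall>f \<in> poly_rv d X. AE \<omega> in M. c0 * f \<omega> + (\<Sum>k<d. c k * complex_of_real (X k \<omega>) * f \<omega>) = 0"
  proof
    fix f
    show "AE \<omega> in M. c0 * f \<omega> + (\<Sum>k<d. c k * complex_of_real (X k \<omega>) * f \<omega>) = 0"
      using ae2
    proof (rule AE_mp, intro AE_I2 impI)
      fix \<omega> assume "c0 + (\<Sum>k<d. c k * complex_of_real (X k \<omega>)) = 0"
      then have "(c0 + (\<Sum>k<d. c k * complex_of_real (X k \<omega>))) * f \<omega> = 0" by simp
      then show "c0 * f \<omega> + (\<Sum>k<d. c k * complex_of_real (X k \<omega>) * f \<omega>) = 0"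
        by (simp add: distrib_right sum_distrib_right)
    qed
  qed
  then have "c k = 0" using nondeg k unfolding non_degenerate_def by blast
  then have "complex_of_real (\<alpha> i j k) = complex_of_real (m3 M X i j k / 2)" unfolding c_def by simp
  then show ?thesis using of_real_eq_iff by blast
qed

end

lemma m3_perm:
  assumes p: "bij_betw p {0..<3::nat} {0..<3::nat}"
  shows "m3 M X (t (p 0)) (t (p 1)) (t (p 2)) = m3 M X (t 0) (t 1) (t 2)"
proof -
  have "X (t (p 0)) \<omega> * X (t (p 1)) \<omega> * X (t (p 2)) \<omega> = X (t 0) \<omega> * X (t 1) \<omega> * X (t 2) \<omega>" for \<omega>
  proof -
    have "(\<Prod>m\<in>{0..<3::nat}. X (t (p m)) \<omega>) = (\<Prod>m\<in>{0..<3::nat}. X (t m) \<omega>)"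
      using prod.reindex_bij_betw[OF p, of "\<lambda>m. X (t m) \<omega>"] .
    then show ?thesis by (simp add: eval_nat_numeral atLeast0_lessThan_Suc mult_ac)
  qed
  then show ?thesis unfolding m3_def by simp
qed

theorem mainTheorem2:
  fixes M :: "'a measure" and d :: nat and X :: "nat \<Rightarrow> 'a \<Rightarrow> real"
    and \<alpha> :: "nat \<Rightarrow> nat \<Rightarrow> nat \<Rightarrow> real" and \<beta> :: "nat \<Rightarrow> nat \<Rightarrow> real"
  assumes rv: "finite_moments_vector M d X"
    and meix: "one_Meixner_with M d X \<alpha> \<beta>"
    and nondeg: "non_degenerate M d X"
    and mean0: "\<forall>k<d. (LINT \<omega>|M. X k \<omega>) = 0"
    and cov: "\<forall>i<d. \<forall>j<d. (LINT \<omega>|M. X i \<omega> * X j \<omega>) = (if i = j then 1 else 0)"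
  shows "\<forall>i<d. \<forall>j<d. \<forall>k<d.
           \<alpha> i j k = \<alpha> j i k \<and>
           \<alpha> i j k = \<alpha> i k j \<and>
           (\<forall>p. bij_betw p {0..<3::nat} {0..<3::nat} \<longrightarrow>
              (let t = (\<lambda>m::nat. [i, j, k] ! m) in \<alpha> (t (p 0)) (t (p 1)) (t (p 2)) = \<alpha> i j k))"
proof -
  have mxi: "mx M d X"
    using rv mean0 cov unfolding finite_moments_vector_def mx_def mx_axioms_def by blast
  have A: "\<alpha> a b c = m3 M X a b c / 2" if "a < d" "b < d" "c < d" for a b c
    using mx.alpha_eq[OF mxi meix nondeg that] .
  have sym1: "m3 M X a b c = m3 M X b a c" for a b c
    unfolding m3_def by (simp add: mult_ac)
  have sym2: "m3 M X a b c = m3 M X a c b" for a b c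
    unfolding m3_def by (simp add: mult_ac)
  show ?thesis
  proof (intro allI impI conjI)
    fix i j k assume i: "i < d" and j: "j < d" and k: "k < d"
    show "\<alpha> i j k = \<alpha> j i k" using A[OF i j k] A[OF j i k] sym1 by simp
    show "\<alpha> i j k = \<alpha> i k j" using A[OF i j k] A[OF i k j] sym2 by simp
    fix p :: "nat \<Rightarrow> nat" assume p: "bij_betw p {0..<3::nat} {0..<3::nat}"
    define t where "t = (\<lambda>m::nat. [i, j, k] ! m)"
    have td: "t (p m) < d" if "m < 3" for m
    proof -
      have "p m < 3" using bij_betw_apply[OF p] that by auto
      then have "p m = 0 \<or> p m = 1 \<or> p m = 2" by auto
      then show ?thesis unfolding t_def using i j k by auto
    qed
    have "\<alpha> (t (p 0)) (t (p 1)) (t (p 2)) = m3 M X (t (p 0)) (t (p 1)) (t (p 2)) / 2"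
      using A td by simp
    also have "\<dots> = m3 M X (t 0) (t 1) (t 2) / 2" using m3_perm[OF p] by simp
    also have "\<dots> = \<alpha> i j k" using A[OF i j k] unfolding t_def by simp
    finally show "let t = (\<lambda>m::nat. [i, j, k] ! m) in \<alpha> (t (p 0)) (t (p 1)) (t (p 2)) = \<alpha> i j k"
      unfolding t_def Let_def .
  qed
qed

end
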